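(* Fix integers $N\ge 2$ and $K\ge 1$. For any Boolean tensor $\mathcal{B}\in\{0,1\}^{N\times N\times K}$ with frontal slices $\mathbf{B}_1,\dots,\mathbf{B}_K$, and any $r\in\mathbb{N}^+$ with \[ r\ge\min\Big\{2KN+1,\;4\sum_{k=1}^K\mathrm{rrank}(\mathbf{B}_k)+1\Big\},\] the set $\pi(\mathcal{M}^{\text{HolE}}_r)$ contains a ranking tensor consistent with $\mathcal{B}$.
   Context: A score-based model assigns a score $s_k(i,j)\in\mathbb{R}$ to each triple, $i,j\in\{1,\dots,N\}$, $k\in\{1,\dots,K\}$; its scoring tensor has frontal slices $\mathbf{S}_k$ with $[\mathbf{S}_k]_{ij}=s_k(i,j)$. For a real $N\times N$ matrix $\mathbf{S}$, $\pi(\mathbf{S})$ is the matrix of dense ranks: $\pi_{ij}(\mathbf{S})=1+$ (number of distinct values among entries of $\mathbf{S}$ strictly larger than $s_{ij}$). For tensors, $\pi$ acts slicewise; for a set $X$, $\pi(X)=\{\pi(x):x\in X\}$. HolE of size $r$: parameters $\mathbf{A}\in\mathbb{R}^{N\times r}$ (rows $\mathbf{a}_i$), $\mathbf{R}\in\mathbb{R}^{K\times r}$ (rows $\mathbf{r}_k$), score $\mathbf{r}_k^T(\mathbf{a}_i\star\mathbf{a}_j)$ where $(\mathbf{a}\star\mathbf{b})_m=\sum_{t=1}^r a_t\, b_{((m+t-2)\bmod r)+1}$ is circular correlation; $\mathcal{M}^{\text{HolE}}_r$ is the set of scoring tensors of such models. A ranking tensor $\mathcal{P}$ is consistent with $\mathcal{B}$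 if for every $k$ and all $i,j,i',j'$: $b_{ijk}=1$ and $b_{i'j'k}=0$ imply $p_{ijk}<p_{i'j'k}$. Rounding rank: $\mathrm{round}$ maps each entry $x$ of a real matrix to $1$ if $x\ge 1/2$ and to $0$ otherwise; for $\mathbf{B}\in\{0,1\}^{m\times n}$, $\mathrm{rrank}(\mathbf{B})=\min\{\mathrm{rank}(\mathbf{A}):\mathbf{A}\in\mathbb{R}^{m\times n},\ \mathrm{round}(\mathbf{A})=\mathbf{B}\}$. *)

theory Defs
  imports "HOL-Analysis.Analysis"
begin

text \<open>Entities are indexed by a finite type 'n (N = CARD('n)), relations by a
finite type 'k (K = CARD('k)). A tensor is a function 'n => 'n => 'k => _,
with T i j k the (i,j) entry of the k-th frontal slice.\<close>

definition dense_rank :: "('n::finite \<Rightarrow> 'm::finite \<Rightarrow> real) \<Rightarrow> 'n \<Rightarrow> 'm \<Rightarrow> nat" where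
  "dense_rank S i j = 1 + card {v. (\<exists>i' j'. v = S i' j') \<and> v > S i j}"

definition rank_tensor :: "('n::finite \<Rightarrow> 'n \<Rightarrow> 'k \<Rightarrow> real) \<Rightarrow> ('n \<Rightarrow> 'n \<Rightarrow> 'k \<Rightarrow> nat)" where
  "rank_tensor T = (\<lambda>i j k. dense_rank (\<lambda>i' j'. T i' j' k) i j)"

definition circ_corr :: "nat \<Rightarrow> (nat \<Rightarrow> real) \<Rightarrow> (nat \<Rightarrow> real) \<Rightarrow> nat \<Rightarrow> real" where
  "circ_corr r a b m = (\<Sum>t<r. a t * b ((m + t) mod r))"

text \<open>HolE score r_k^T (a_i star a_j); rows a_i = A i, r_k = R k (entries 0..r-1).\<close>
definition hole_score :: "nat \<Rightarrow> ('n \<Rightarrow> nat \<Rightarrow> real) \<Rightarrow> ('k \<Rightarrow> nat \<Rightarrow> real) \<Rightarrow> 'n \<Rightarrow> 'n \<Rightarrow> 'k \<Rightarrow> real" where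
  "hole_score r A R i j k = (\<Sum>m<r. R k m * circ_corr r (A i) (A j) m)"

definition hole_models :: "nat \<Rightarrow> ('n::finite \<Rightarrow> 'n \<Rightarrow> 'k::finite \<Rightarrow> real) set" where
  "hole_models r = {hole_score r A R | A R. True}"

definition consistent :: "('n \<Rightarrow> 'n \<Rightarrow> 'k \<Rightarrow> nat) \<Rightarrow> ('n \<Rightarrow> 'n \<Rightarrow> 'k \<Rightarrow> bool) \<Rightarrow> bool" where
  "consistent P B \<longleftrightarrow> (\<forall>k i j i' j'. B i j k \<and> \<not> B i' j' k \<longrightarrow> P i j k < P i' j' k)"

definition round_mat :: "real^'n^'m \<Rightarrow> real^'n^'m" where
  "round_mat A = (\<chi> i j. if A $ i $ j \<ge> 1/2 then 1 else 0)"

definition rrank :: "real^'n^'m \<Rightarrow> nat" where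
  "rrank B = Inf {rank A | A. round_mat A = B}"

definition bool_slice :: "('n \<Rightarrow> 'n \<Rightarrow> 'k \<Rightarrow> bool) \<Rightarrow> 'k \<Rightarrow> real^'n^'n" where
  "bool_slice B k = (\<chi> i j. if B i j k then 1 else 0)"

end

theory Submission
  imports Defs
begin


lemma dense_rank_less:
  fixes S :: "'n::finite \<Rightarrow> 'm::finite \<Rightarrow> real"
  assumes "S i j > S i' j'"
  shows "dense_rank S i j < dense_rank S i' j'"
proof -
  have fin: "finite {v. (\<exists>a b. v = S a b) \<and> v > S i' j'}"
  proof (rule finite_subset[of _ "range (\<lambda>p. S (fst p) (snd p))"])
    show "{v. (\<exists>a b. v = S a b) \<and> v > S i' j'} \<subseteq> range (\<lambda>p. S (fst p) (snd p))"
    proof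
      fix v assume "v \<in> {v. (\<exists>a b. v = S a b) \<and> v > S i' j'}"
      then obtain a b where "v = S a b" by auto
      then show "v \<in> range (\<lambda>p. S (fst p) (snd p))" by (intro image_eqI[where x="(a,b)"]) auto
    qed
  qed simp
  have "{v. (\<exists>a b. v = S a b) \<and> v > S i j} \<subset> {v. (\<exists>a b. v = S a b) \<and> v > S i' j'}"
    using assms by auto
  then have "card {v. (\<exists>a b. v = S a b) \<and> v > S i j} < card {v. (\<exists>a b. v = S a b) \<and> v > S i' j'}"
    using fin by (rule psubset_card_mono[rotated])
  then show ?thesis unfolding dense_rank_def by simp
qed

lemma sep_consistent:
  fixes T :: "'n::finite \<Rightarrow> 'n \<Rightarrow> 'k::finite \<Rightarrow> real"
  assumes "\<And>k i j i' j'. B i j k \<Longrightarrow> \<not> B i' j' k \<Longrightarrow> T i j k > T i' j' k"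
  shows "consistent (rank_tensor T) B"
  unfolding consistent_def rank_tensor_def
  using assms by (auto intro!: dense_rank_less)

lemma approx_sep:
  fixes X :: "'n::finite \<Rightarrow> 'n \<Rightarrow> 'k::finite \<Rightarrow> real"
  assumes sep: "\<And>k i j i' j'. B i j k \<Longrightarrow> \<not> B i' j' k \<Longrightarrow> X i j k > X i' j' k"
    and approx: "\<And>\<epsilon>. \<epsilon> > 0 \<Longrightarrow> \<exists>A R. \<forall>i j k. \<bar>hole_score r A R i j k - X i j k\<bar> \<le> \<epsilon>"
  shows "\<exists>P \<in> rank_tensor ` (hole_models r :: ('n \<Rightarrow> 'n \<Rightarrow> 'k \<Rightarrow> real) set). consistent P B"
proof -
  define D where "D = {X i j k - X i' j' k | i j k i' j'. B i j k \<and> \<not> B i' j' k}"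
  have finD: "finite D"
  proof -
    have "D \<subseteq> (\<lambda>(i,j,k,i',j'). X i j k - X i' j' k) ` UNIV" unfolding D_def proof (clarsimp) fix i j k i' j' show "X i j k - X i' j' k \<in> range (\<lambda>(i, j, k, i', j'). X i j k - X i' j' k)" by (rule image_eqI[where x="(i,j,k,i',j')"]) auto qed
    then show ?thesis by (rule finite_subset) simp
  qed
  have posD: "\<forall>d\<in>D. d > 0" unfolding D_def using sep by auto
  obtain \<eta> where eta: "\<eta> > 0" "\<forall>d\<in>D. \<eta> \<le> d"
  proof (cases "D = {}")
    case True then show ?thesis using that[of 1] by auto
  next
    case False
    then show ?thesis using that[of "Min D"] finD posD by auto
  qed
  obtain A R where AR: "\<forall>i j k. \<bar>hole_score r A R i j k - X i j k\<bar> \<le> \<eta>/3"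
    using approx[of "\<eta>/3"] eta by auto
  have "consistent (rank_tensor (hole_score r A R)) B"
  proof (rule sep_consistent)
    fix k i j i' j' assume "B i j k" "\<not> B i' j' k"
    then have "X i j k - X i' j' k \<in> D" unfolding D_def by blast
    then have "\<eta> \<le> X i j k - X i' j' k" using eta by auto
    moreover have "\<bar>hole_score r A R i j k - X i j k\<bar> \<le> \<eta>/3" "\<bar>hole_score r A R i' j' k - X i' j' k\<bar> \<le> \<eta>/3"
      using AR by auto
    ultimately show "hole_score r A R i j k > hole_score r A R i' j' k" using eta by linarith
  qed
  moreover have "hole_score r A R \<in> (hole_models r :: ('n \<Rightarrow> 'n \<Rightarrow> 'k \<Rightarrow> real) set)"
    unfolding hole_models_def by blast
  ultimately show ?thesis by blast
qed



lemma b1_bound: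
  fixes C :: real
  assumes C: "C \<ge> 1" and m0: "2*m0 < r" and t: "N \<le> t" "t < r"
  defines "\<sigma> \<equiv> (m0 + t) mod r"
  shows "C^m0 / C * (1 / C^t) * (if \<sigma> < N then C * C^\<sigma> else 1 / C^\<sigma>) \<le> 1 / C"
proof (cases "\<sigma> < N")
  case True
  have wrap: "m0 + t \<ge> r"
  proof (rule ccontr)
    assume "\<not> m0 + t \<ge> r" then have "\<sigma> = m0 + t" unfolding \<sigma>_def by simp
    then show False using True t by simp
  qed
  have "m0 + t < 2*r" using m0 t by simp
  then have s: "\<sigma> = m0 + t - r" unfolding \<sigma>_def using wrap
    by (simp add: mod_if le_mod_geq)
  have le: "m0 + \<sigma> + 1 \<le> t" using s m0 wrap by simp
  have "C^(m0 + \<sigma> + 1) \<le> C^t" by (rule power_increasing[OF le C])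
  then have "C^m0 * C^\<sigma> * C \<le> C^t" by (simp add: power_add mult_ac)
  moreover have "C^m0 / C * (1 / C^t) * (C * C^\<sigma>) = C^m0 * C^\<sigma> / C^t" using C by (simp add: field_simps)
  ultimately show ?thesis using True C by (simp add: field_simps)
next
  case False
  have le: "m0 \<le> t + \<sigma>"
  proof (cases "m0 + t < r")
    case True then show ?thesis unfolding \<sigma>_def by simp
  next
    case F: False
    have "m0 + t < 2*r" using m0 t by simp
    then have s: "\<sigma> = m0 + t - r" unfolding \<sigma>_def using F
      by (simp add: mod_if le_mod_geq)
    then show ?thesis using F m0 by simp
  qed
  have "C^m0 \<le> C^(t+\<sigma>)" by (rule power_increasing[OF le C])
  then have "C^m0 \<le> C^t * C^\<sigma>" by (simp add: power_add)
  then have q: "C^m0 / (C^t * C^\<sigma>) \<le> 1" using C by simp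
  have eq: "C^m0 / C * (1 / C^t) * (1 / C^\<sigma>) = C^m0 / (C^t * C^\<sigma>) / C" using C by (simp add: field_simps)
  have "C^m0 / (C^t * C^\<sigma>) / C \<le> 1 / C" using q C by (intro divide_right_mono) auto
  with eq False show ?thesis by (simp add: mult_ac)
qed



lemma branch1:
  fixes B :: "'n::finite \<Rightarrow> 'n \<Rightarrow> 'k::finite \<Rightarrow> bool" and \<epsilon> :: real
  assumes r: "r \<ge> 2*CARD('k)*CARD('n)+1" and eps: "\<epsilon> > 0"
  shows "\<exists>A R. \<forall>i j k. \<bar>hole_score r A R i j k - (if B i j k then 1 else 0)\<bar> \<le> \<epsilon>"
proof -
  define N where "N = CARD('n)"
  define K where "K = CARD('k)"
  obtain \<phi> :: "'n \<Rightarrow> nat" where phi: "bij_betw \<phi> UNIV {0..<N}"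
    using ex_bij_betw_finite_nat[of "UNIV::'n set"] unfolding N_def by auto
  obtain \<psi> :: "'k \<Rightarrow> nat" where psi: "bij_betw \<psi> UNIV {0..<K}"
    using ex_bij_betw_finite_nat[of "UNIV::'k set"] unfolding K_def by auto
  have phiinj: "inv \<phi> (\<phi> i) = i" for i using phi by (simp add: bij_betw_def)
  have psiinj: "inv \<psi> (\<psi> k) = k" for k using psi by (simp add: bij_betw_def)
  have phiN: "\<phi> i < N" for i using phi by (auto simp: bij_betw_def)
  have psiK: "\<psi> k < K" for k using psi by (auto simp: bij_betw_def)
  have N1: "N \<ge> 1" unfolding N_def by (simp add: Suc_le_eq)
  have K1: "K \<ge> 1" unfolding K_def by (simp add: Suc_le_eq)
  define C :: real where "C = real r / \<epsilon> + 1"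
  have C1: "C \<ge> 1" using eps by (simp add: C_def)
  have Cpos: "C > 0" using C1 by simp
  have rC: "real r / C \<le> \<epsilon>"
  proof -
    have "real r \<le> \<epsilon> * C" using eps by (simp add: C_def field_simps)
    then show ?thesis using Cpos by (simp add: field_simps)
  qed
  define A :: "'n \<Rightarrow> nat \<Rightarrow> real" where
    "A = (\<lambda>i t. if t < N then (if \<phi> i = t then C * C^t else 0)
               else if t < (K+1)*N then (if B (inv \<phi> (t mod N)) i (inv \<psi> (t div N - 1)) then 1 / C^t else 0)
               else 0)"
  define m0 where "m0 = (\<lambda>k. (\<psi> k + 1) * N)"
  define R :: "'k \<Rightarrow> nat \<Rightarrow> real" where "R = (\<lambda>k m. if m = m0 k then C^m / C else 0)"
  have Abnd: "\<bar>A i t\<bar> \<le> (if t < N then C * C^t else 1 / C^t)" for i t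
    using C1 by (auto simp: A_def)
  have m0le: "m0 k \<le> K * N" for k
  proof -
    have "\<psi> k + 1 \<le> K" using psiK[of k] by simp
    then show ?thesis unfolding m0_def by (rule mult_le_mono1)
  qed
  have NKN: "N \<le> K*N" using K1 by simp
  have KN: "2 * (K*N) < r" using r unfolding K_def N_def by simp
  have "\<bar>hole_score r A R i j k - (if B i j k then 1 else 0)\<bar> \<le> \<epsilon>" for i j k
  proof -
    let ?m = "m0 k"
    let ?f = "\<lambda>t. C^?m / C * (A i t * A j ((?m + t) mod r))"
    have mr: "?m < r" using m0le[of k] KN by linarith
    have Nm: "N \<le> ?m" unfolding m0_def by simp
    have "hole_score r A R i j k = (\<Sum>m<r. if m = ?m then C^m / C * circ_corr r (A i) (A j) m else 0)"
      unfolding hole_score_def R_def by (intro sum.cong) auto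
    also have "\<dots> = C^?m / C * circ_corr r (A i) (A j) ?m"
      using mr by (simp add: sum.delta')
    also have "\<dots> = (\<Sum>t<r. ?f t)"
      unfolding circ_corr_def by (simp add: sum_distrib_left)
    also have "\<dots> = (\<Sum>t<N. ?f t) + (\<Sum>t\<in>{N..<r}. ?f t)"
    proof -
      have "(\<Sum>t\<in>{0..<N}. ?f t) + (\<Sum>t\<in>{N..<r}. ?f t) = (\<Sum>t\<in>{0..<r}. ?f t)"
        using Nm mr by (intro sum.atLeastLessThan_concat) auto
      then show ?thesis by (simp add: atLeast0LessThan)
    qed
    finally have split: "hole_score r A R i j k = (\<Sum>t<N. ?f t) + (\<Sum>t\<in>{N..<r}. ?f t)" .
    have main: "(\<Sum>t<N. ?f t) = (if B i j k then 1 else 0)"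
    proof -
      have "?f t = (if t = \<phi> i then (if B i j k then 1 else 0) else 0)" if t: "t < N" for t
      proof -
        have lt: "?m + t < r" using m0le[of k] KN t NKN by linarith
        have lt2: "?m + t < (K+1)*N" using t m0le[of k] by (simp add: algebra_simps)
        have e: "?m + t = t + (\<psi> k + 1) * N" by (simp add: m0_def)
        have md: "(?m + t) mod N = t" "(?m + t) div N = \<psi> k + 1"
        proof -
          have Np: "N \<noteq> 0" using N1 by simp
          show "(?m + t) mod N = t" unfolding e using t by (subst mod_mult_self1) simp
          show "(?m + t) div N = \<psi> k + 1" unfolding e using t Np by (subst div_mult_self1[OF Np]) simp
        qed
        have nl: "\<not> ?m + t < N" using Nm by simp
        have Aj: "A j (?m + t) = (if B (inv \<phi> t) j k then 1 / C^(?m+t) else 0)"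
          unfolding A_def using nl lt2 md psiinj by simp
        show ?thesis
        proof (cases "t = \<phi> i")
          case True
          have Ai: "A i t = C * C^t" using t True by (simp add: A_def)
          have one: "C^?m / C * (C * C^t * (1 / C^(?m+t))) = 1"
            using Cpos by (simp add: power_add)
          have "(?m + t) mod r = ?m + t" using lt by simp
          then show ?thesis using True Ai Aj one phiinj[of i] Cpos by simp
        next
          case False
          then show ?thesis using t by (simp add: A_def)
        qed
      qed
      then have "(\<Sum>t<N. ?f t) = (\<Sum>t<N. if t = \<phi> i then (if B i j k then 1 else 0) else 0)"
        by (intro sum.cong) auto
      also have "\<dots> = (if B i j k then 1 else 0)" using phiN[of i] by (simp add: sum.delta')
      finally show ?thesis .
    qed
    have err: "\<bar>\<Sum>t\<in>{N..<r}. ?f t\<bar> \<le> \<epsilon>"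
    proof -
      have "\<bar>?f t\<bar> \<le> 1 / C" if t: "t \<in> {N..<r}" for t
      proof -
        let ?s = "(?m + t) mod r"
        have "\<bar>?f t\<bar> = C^?m / C * (\<bar>A i t\<bar> * \<bar>A j ?s\<bar>)"
          using Cpos by (simp add: abs_mult)
        also have "\<dots> \<le> C^?m / C * ((1 / C^t) * (if ?s < N then C * C^?s else 1 / C^?s))"
        proof -
          have a1: "\<bar>A i t\<bar> \<le> 1 / C^t" using Abnd[of i t] t by simp
          have a2: "\<bar>A j ?s\<bar> \<le> (if ?s < N then C * C^?s else 1 / C^?s)" by (rule Abnd)
          have "\<bar>A i t\<bar> * \<bar>A j ?s\<bar> \<le> (1 / C^t) * (if ?s < N then C * C^?s else 1 / C^?s)"
            by (rule mult_mono[OF a1 a2]) (use Cpos in auto)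
          then show ?thesis using Cpos by (intro mult_left_mono) auto
        qed
        also have "\<dots> \<le> 1 / C"
          using b1_bound[OF C1, of ?m r N t] KN m0le[of k] t by (simp add: mult.assoc)
        finally show ?thesis .
      qed
      then have "\<bar>\<Sum>t\<in>{N..<r}. ?f t\<bar> \<le> (\<Sum>t\<in>{N..<r}. 1 / C)"
        by (intro order_trans[OF sum_abs] sum_mono) auto
      also have "\<dots> = real (r - N) / C" by simp
      also have "\<dots> \<le> real r / C" using Cpos by (intro divide_right_mono) auto
      finally show ?thesis using rC by linarith
    qed
    show ?thesis using split main err by simp
  qed
  then show ?thesis by blast
qed



definition wf :: "real \<Rightarrow> nat \<Rightarrow> nat \<Rightarrow> real" where
  "wf \<tau> S x = exp (- \<tau> * (real x - (2 * real S - 1) / 2)^2)"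

lemma ratio_identity:
  fixes t s S :: nat and \<tau> :: real
  assumes "s < S"
  shows "wf \<tau> S t * wf \<tau> S (t + (2 * S - 1 - 2 * s)) / (wf \<tau> S s * wf \<tau> S (2 * S - 1 - s)) = exp (- 2 * \<tau> * (real t - real s)^2)"
proof -
  define c where "c = (2 * real S - 1) / 2"
  have r1: "real (t + (2 * S - 1 - 2 * s)) = real t + 2 * real S - 1 - 2 * real s" using assms(1) by (simp add: of_nat_diff)
  have r2: "real (2 * S - 1 - s) = 2 * real S - 1 - real s" using assms(1) by (simp add: of_nat_diff)
  have "wf \<tau> S t * wf \<tau> S (t + (2 * S - 1 - 2 * s)) / (wf \<tau> S s * wf \<tau> S (2 * S - 1 - s))
      = exp (- \<tau> * ((real t - c)^2 + (real t + 2 * real S - 1 - 2 * real s - c)^2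
                     - (real s - c)^2 - (2 * real S - 1 - real s - c)^2))"
    unfolding wf_def r1 r2 c_def[symmetric] by (simp add: exp_add[symmetric] exp_diff[symmetric] algebra_simps)
  also have "(real t - c)^2 + (real t + 2 * real S - 1 - 2 * real s - c)^2
                     - (real s - c)^2 - (2 * real S - 1 - real s - c)^2 = 2 * (real t - real s)^2"
    unfolding c_def by (simp add: power2_eq_square algebra_simps)
  finally show ?thesis by simp
qed



lemma branch2:
  fixes u v :: "nat \<Rightarrow> 'n::finite \<Rightarrow> real" and \<kappa> :: "nat \<Rightarrow> 'k::finite" and \<epsilon> :: real
  assumes r: "4 * S + 1 \<le> r" and eps: "\<epsilon> > 0"
  shows "\<exists>A R. \<forall>i j k. \<bar>hole_score r A R i j k - (\<Sum>s<S. if \<kappa> s = k then u s i * v s j else 0)\<bar> \<le> \<epsilon>"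
proof -
  define M where "M = 1 + (\<Sum>s<S. \<Sum>i\<in>UNIV. \<bar>u s i\<bar> + \<bar>v s i\<bar>)"
  define F where "F = (\<lambda>t i. if t < S then u t i else if t < 2 * S then v (2 * S - 1 - t) i else 0)"
  have uvb: "\<bar>u s i\<bar> \<le> M \<and> \<bar>v s i\<bar> \<le> M" if s: "s < S" for s i
  proof -
    have "\<bar>u s i\<bar> + \<bar>v s i\<bar> \<le> (\<Sum>i\<in>UNIV. \<bar>u s i\<bar> + \<bar>v s i\<bar>)"
      by (rule member_le_sum) auto
    also have "\<dots> \<le> (\<Sum>s<S. \<Sum>i\<in>UNIV. \<bar>u s i\<bar> + \<bar>v s i\<bar>)"
      using s by (intro member_le_sum[where f = "\<lambda>s. \<Sum>i\<in>UNIV. \<bar>u s i\<bar> + \<bar>v s i\<bar>"]) (auto intro: sum_nonneg)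
    finally show ?thesis unfolding M_def by auto
  qed
  have Fb: "\<bar>F t i\<bar> \<le> M" for t i
  proof -
    have M0: "M \<ge> 1" unfolding M_def by (auto intro!: sum_nonneg)
    show ?thesis using uvb[of t i] uvb[of "2 * S - 1 - t" i] M0 by (auto simp: F_def)
  qed
  have Mpos: "M > 0" unfolding M_def by (smt (verit) sum_nonneg abs_ge_zero)
  define \<delta> where "\<delta> = \<epsilon> / (2 * real S * real S * M^2 + 1 + \<epsilon>)"
  have den: "2 * real S * real S * M^2 + 1 + \<epsilon> > 0" proof -
    have "2 * real S * real S * M^2 \<ge> 0" by simp
    then show ?thesis using eps by linarith
  qed
  have dpos: "\<delta> > 0" using eps den by (simp add: \<delta>_def)
  have dlt1: "\<delta> < 1"
  proof -
    have "2 * real S * real S * M^2 \<ge> 0" by simp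
    then have "\<epsilon> < 2 * real S * real S * M^2 + 1 + \<epsilon>" by linarith
    then show ?thesis unfolding \<delta>_def using den by (simp add: divide_less_eq_1_pos)
  qed
  have dbound: "2 * real S * real S * M^2 * \<delta> \<le> \<epsilon>"
  proof -
    have "\<delta> * (2 * real S * real S * M^2 + 1 + \<epsilon>) = \<epsilon>" using den by (simp add: \<delta>_def)
    moreover have "\<delta> * (1 + \<epsilon>) \<ge> 0" using dpos eps by simp
    ultimately show ?thesis by (simp add: algebra_simps)
  qed
  define \<tau> where "\<tau> = - ln \<delta> / 2"
  have tau0: "\<tau> \<ge> 0" using dpos dlt1 by (simp add: \<tau>_def)
  have etau: "exp (- 2 * \<tau>) = \<delta>" using dpos by (simp add: \<tau>_def)
  define W where "W = (\<lambda>s. wf \<tau> S s * wf \<tau> S (2 * S - 1 - s))"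
  define d where "d = (\<lambda>s. 2 * S - 1 - 2 * s)"
  define A :: "'n \<Rightarrow> nat \<Rightarrow> real" where "A = (\<lambda>i t. wf \<tau> S t * F t i)"
  define R :: "'k \<Rightarrow> nat \<Rightarrow> real" where
    "R = (\<lambda>k m. \<Sum>s<S. if \<kappa> s = k \<and> m = d s then 1 / W s else 0)"
  have Wpos: "W s > 0" for s by (simp add: W_def wf_def)
  have ds: "d s < r" if "s < S" for s using that r by (simp add: d_def)
  have step2: "\<bar>circ_corr r (A i) (A j) (d s) / W s - u s i * v s j\<bar> \<le> 2 * real S * (\<delta> * M^2)"
    if s: "s < S" for s i j
  proof -
    define g where "g = (\<lambda>t. exp (- 2 * \<tau> * (real t - real s)^2) * F t i * F (t + d s) j)"
    have "circ_corr r (A i) (A j) (d s) = (\<Sum>t<2 * S. A i t * A j ((d s + t) mod r))"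
      unfolding circ_corr_def
    proof (rule sum.mono_neutral_right)
      show "\<forall>t\<in>{..<r} - {..<2 * S}. A i t * A j ((d s + t) mod r) = 0"
        by (auto simp: A_def F_def)
    qed (use r in auto)
    also have "\<dots> = (\<Sum>t<2 * S. A i t * A j (t + d s))"
    proof (rule sum.cong)
      fix t assume "t \<in> {..<2 * S}"
      then have "d s + t < r" using r s by (simp add: d_def)
      then show "A i t * A j ((d s + t) mod r) = A i t * A j (t + d s)" by (simp add: add.commute)
    qed simp
    finally have c1: "circ_corr r (A i) (A j) (d s) / W s = (\<Sum>t<2 * S. A i t * A j (t + d s) / W s)"
      by (simp add: sum_divide_distrib)
    have c2: "A i t * A j (t + d s) / W s = g t" for t
    proof -
      have "A i t * A j (t + d s) / W s = (wf \<tau> S t * wf \<tau> S (t + d s) / W s) * F t i * F (t + d s) j"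
        by (simp add: A_def)
      also have "wf \<tau> S t * wf \<tau> S (t + d s) / W s = exp (- 2 * \<tau> * (real t - real s)^2)"
        unfolding W_def d_def by (rule ratio_identity[OF s])
      finally show ?thesis by (simp add: g_def)
    qed
    have "circ_corr r (A i) (A j) (d s) / W s = (\<Sum>t<2 * S. g t)" using c1 c2 by simp
    also have "\<dots> = g s + (\<Sum>t\<in>{..<2 * S} - {s}. g t)"
      using s by (intro sum.remove) auto
    finally have c3: "circ_corr r (A i) (A j) (d s) / W s = g s + (\<Sum>t\<in>{..<2 * S} - {s}. g t)" .
    have gs: "g s = u s i * v s j"
    proof -
      have e1: "s + d s = 2 * S - 1 - s" using s by (simp add: d_def)
      have e2: "2 * S - 1 - (2 * S - 1 - s) = s" using s by simp
      have n1: "\<not> (2 * S - 1 - s < S)" "2 * S - 1 - s < 2 * S" using s by auto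
      have "F (s + d s) j = v s j" unfolding F_def e1 using n1 e2 by (simp only: if_False if_True)
      moreover have "F s i = u s i" using s by (simp add: F_def)
      ultimately show ?thesis by (simp add: g_def)
    qed
    have gb: "\<bar>g t\<bar> \<le> \<delta> * M^2" if t: "t \<noteq> s" for t
    proof -
      have "(real t - real s)^2 \<ge> 1"
      proof -
        have "\<bar>real t - real s\<bar> \<ge> 1" using t by linarith
        then have "1 * 1 \<le> \<bar>real t - real s\<bar> * \<bar>real t - real s\<bar>" by (intro mult_mono) auto
        then show ?thesis by (simp add: power2_eq_square)
      qed
      then have "2 * \<tau> * 1 \<le> 2 * \<tau> * (real t - real s)^2" using tau0
        by (intro mult_left_mono) auto
      then have "- 2 * \<tau> * (real t - real s)^2 \<le> - 2 * \<tau>" by simp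
      then have e: "exp (- 2 * \<tau> * (real t - real s)^2) \<le> \<delta>" using etau by (metis exp_le_cancel_iff)
      have "\<bar>g t\<bar> = exp (- 2 * \<tau> * (real t - real s)^2) * (\<bar>F t i\<bar> * \<bar>F (t + d s) j\<bar>)"
        by (simp add: g_def abs_mult)
      also have "\<dots> \<le> \<delta> * (M * M)"
        by (intro mult_mono e Fb mult_mono) (use Mpos dpos in auto)
      finally show ?thesis by (simp add: power2_eq_square)
    qed
    have "\<bar>\<Sum>t\<in>{..<2 * S} - {s}. g t\<bar> \<le> (\<Sum>t\<in>{..<2 * S} - {s}. \<delta> * M^2)"
      by (intro order_trans[OF sum_abs] sum_mono gb) auto
    also have "\<dots> = real (card ({..<2 * S} - {s})) * (\<delta> * M^2)" by simp
    also have "\<dots> \<le> real (2 * S) * (\<delta> * M^2)"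
    proof (intro mult_right_mono)
      have "card ({..<2 * S} - {s}) \<le> card {..<2 * S}" by (intro card_mono) auto
      then show "real (card ({..<2 * S} - {s})) \<le> real (2 * S)" by simp
    qed (use dpos in simp)
    finally show ?thesis using c3 gs by simp
  qed
  have "\<bar>hole_score r A R i j k - (\<Sum>s<S. if \<kappa> s = k then u s i * v s j else 0)\<bar> \<le> \<epsilon>" for i j k
  proof -
    have "hole_score r A R i j k = (\<Sum>m<r. \<Sum>s<S. (if \<kappa> s = k \<and> m = d s then 1 / W s else 0) * circ_corr r (A i) (A j) m)"
      unfolding hole_score_def R_def by (simp add: sum_distrib_right)
    also have "\<dots> = (\<Sum>s<S. \<Sum>m<r. (if \<kappa> s = k \<and> m = d s then 1 / W s else 0) * circ_corr r (A i) (A j) m)"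
      by (rule sum.swap)
    also have "\<dots> = (\<Sum>s<S. if \<kappa> s = k then circ_corr r (A i) (A j) (d s) / W s else 0)"
    proof (rule sum.cong)
      fix s assume "s \<in> {..<S}"
      then have "d s < r" using ds by simp
      then show "(\<Sum>m<r. (if \<kappa> s = k \<and> m = d s then 1 / W s else 0) * circ_corr r (A i) (A j) m)
            = (if \<kappa> s = k then circ_corr r (A i) (A j) (d s) / W s else 0)"
        by (cases "\<kappa> s = k") (simp_all add: if_distrib[of "\<lambda>x. x * _"] sum.delta' cong: if_cong)
    qed simp
    finally have hs: "hole_score r A R i j k = \<dots>" .
    have "\<bar>(\<Sum>s<S. if \<kappa> s = k then circ_corr r (A i) (A j) (d s) / W s else 0) - (\<Sum>s<S. if \<kappa> s = k then u s i * v s j else 0)\<bar>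
        = \<bar>\<Sum>s<S. if \<kappa> s = k then circ_corr r (A i) (A j) (d s) / W s - u s i * v s j else 0\<bar>"
      by (simp add: sum_subtractf[symmetric] if_distrib[symmetric] cong: if_cong) (intro arg_cong[where f=abs] sum.cong, auto)
    also have "\<dots> \<le> (\<Sum>s<S. 2 * real S * (\<delta> * M^2))"
      by (intro order_trans[OF sum_abs] sum_mono) (auto intro: step2 order_trans[OF _ step2] simp: mult_nonneg_nonneg dpos less_imp_le)
    also have "\<dots> = 2 * real S * real S * M^2 * \<delta>" by (simp add: algebra_simps)
    finally show ?thesis using hs dbound by simp
  qed
  then show ?thesis by blast
qed



lemma rank_factor:
  fixes A :: "real^'n::finite^'m::finite"
  shows "\<exists>u v. \<forall>i j. A$i$j = (\<Sum>l<rank A. u l i * v l j)"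
proof -
  obtain Bs where Bs: "Bs \<subseteq> rows A" "independent Bs" "rows A \<subseteq> span Bs" "card Bs = dim (rows A)"
    by (rule basis_exists)
  have fin: "finite Bs" using Bs(2) by (rule finiteI_independent)
  have rk: "rank A = card Bs" using Bs(4) by (simp add: row_rank_def)
  obtain h where h: "bij_betw h {0..<card Bs} Bs" using ex_bij_betw_nat_finite[OF fin] by auto
  have "\<forall>i. \<exists>c. row i A = (\<Sum>x\<in>Bs. c x *\<^sub>R x)"
  proof
    fix i
    have "row i A \<in> rows A" by (auto simp: rows_def)
    then have "row i A \<in> span Bs" using Bs(3) by auto
    then show "\<exists>c. row i A = (\<Sum>x\<in>Bs. c x *\<^sub>R x)" unfolding span_finite[OF fin] by auto
  qed
  then obtain c where c: "\<And>i. row i A = (\<Sum>x\<in>Bs. c i x *\<^sub>R x)" by metis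
  have "A$i$j = (\<Sum>l<rank A. c i (h l) * (h l $ j))" for i j
  proof -
    have "A$i$j = (row i A)$j" by (simp add: row_def)
    also have "\<dots> = (\<Sum>x\<in>Bs. c i x * x $ j)" by (simp add: c sum_component)
    also have "\<dots> = (\<Sum>l\<in>{0..<card Bs}. c i (h l) * (h l $ j))"
      by (rule sum.reindex_bij_betw[OF h, symmetric])
    finally show ?thesis by (simp add: rk atLeast0LessThan)
  qed
  then show ?thesis by (intro exI[of _ "\<lambda>l i. c i (h l)"] exI[of _ "\<lambda>l j. h l $ j"]) auto
qed

lemma sum_split_add: "(\<Sum>s<S + p. f s) = (\<Sum>s<S. f s) + (\<Sum>l<p. f (S + l))"
  for f :: "nat \<Rightarrow> real"
  by (induct p) auto

lemma family_fin:
  fixes \<rho> :: "'k \<Rightarrow> nat" and X :: "'k \<Rightarrow> 'n \<Rightarrow> 'n \<Rightarrow> real"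
  assumes fac: "\<And>k. \<exists>u v. \<forall>i j. X k i j = (\<Sum>l<\<rho> k. u l i * v l j)"
    and "finite F"
  shows "\<exists>S (\<kappa>::nat \<Rightarrow> 'k) (u::nat \<Rightarrow> 'n \<Rightarrow> real) v. S = (\<Sum>k\<in>F. \<rho> k) \<and> (\<forall>s<S. \<kappa> s \<in> F) \<and>
            (\<forall>k\<in>F. \<forall>i j. X k i j = (\<Sum>s<S. if \<kappa> s = k then u s i * v s j else 0))"
  using assms(2)
proof (induction F rule: finite_induct)
  case empty
  show ?case by auto
next
  case (insert k0 F)
  then obtain S \<kappa> u v where IH: "S = (\<Sum>k\<in>F. \<rho> k)" "\<forall>s<S. \<kappa> s \<in> F"
    "\<forall>k\<in>F. \<forall>i j. X k i j = (\<Sum>s<S. if \<kappa> s = k then u s i * v s j else 0)" by blast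
  obtain u' v' where f0: "\<forall>i j. X k0 i j = (\<Sum>l<\<rho> k0. u' l i * v' l j)" using fac by blast
  define \<kappa>2 where "\<kappa>2 = (\<lambda>s. if s < S then \<kappa> s else k0)"
  define u2 where "u2 = (\<lambda>s. if s < S then u s else u' (s - S))"
  define v2 where "v2 = (\<lambda>s. if s < S then v s else v' (s - S))"
  have "\<forall>k\<in>insert k0 F. \<forall>i j. X k i j = (\<Sum>s<S + \<rho> k0. if \<kappa>2 s = k then u2 s i * v2 s j else 0)"
  proof (intro ballI allI)
    fix k i j assume k: "k \<in> insert k0 F"
    have "(\<Sum>s<S + \<rho> k0. if \<kappa>2 s = k then u2 s i * v2 s j else 0)
        = (\<Sum>s<S. if \<kappa> s = k then u s i * v s j else 0) + (\<Sum>l<\<rho> k0. if k0 = k then u' l i * v' l j else 0)"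
    proof -
      have a: "(\<Sum>s<S. if \<kappa>2 s = k then u2 s i * v2 s j else 0) = (\<Sum>s<S. if \<kappa> s = k then u s i * v s j else 0)"
        by (intro sum.cong) (auto simp: \<kappa>2_def u2_def v2_def)
      have b: "(\<Sum>l<\<rho> k0. if \<kappa>2 (S + l) = k then u2 (S + l) i * v2 (S + l) j else 0) = (\<Sum>l<\<rho> k0. if k0 = k then u' l i * v' l j else 0)"
        by (intro sum.cong) (auto simp: \<kappa>2_def u2_def v2_def)
      show ?thesis unfolding sum_split_add a b ..
    qed
    also have "\<dots> = X k i j"
    proof (cases "k = k0")
      case True
      then have "k \<notin> F" using insert by auto
      have "(\<Sum>s<S. if \<kappa> s = k then u s i * v s j else 0) = 0"
      proof (rule sum.neutral, intro ballI)
        fix s assume s: "s \<in> {..<S}"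
        show "(if \<kappa> s = k then u s i * v s j else 0) = 0"
        proof (cases "\<kappa> s = k")
          case True
          then show ?thesis using IH(2) s \<open>k \<notin> F\<close> by auto
        qed simp
      qed
      then show ?thesis using True f0 by simp
    next
      case False
      then show ?thesis using k IH by simp
    qed
    finally show "X k i j = (\<Sum>s<S + \<rho> k0. if \<kappa>2 s = k then u2 s i * v2 s j else 0)" by simp
  qed
  moreover have "\<forall>s<S + \<rho> k0. \<kappa>2 s \<in> insert k0 F" using IH(2) by (auto simp: \<kappa>2_def)
  ultimately show ?case using IH insert by (intro exI[of _ "S + \<rho> k0"] exI[of _ \<kappa>2] exI[of _ u2] exI[of _ v2]) simp
qed


theorem corollary4:
  fixes B :: "'n::finite \<Rightarrow> 'n \<Rightarrow> 'k::finite \<Rightarrow> bool" and r :: nat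
  assumes "CARD('n) \<ge> 2"
    and "r \<ge> 1"
    and "r \<ge> min (2 * CARD('k) * CARD('n) + 1) (4 * (\<Sum>k\<in>UNIV. rrank (bool_slice B k)) + 1)"
  shows "\<exists>P \<in> rank_tensor ` (hole_models r :: ('n \<Rightarrow> 'n \<Rightarrow> 'k \<Rightarrow> real) set). consistent P B"
proof (cases "r \<ge> 2 * CARD('k) * CARD('n) + 1")
  case True
  show ?thesis
  proof (rule approx_sep[where X = "\<lambda>i j k. if B i j k then 1 else 0"])
    fix \<epsilon> :: real assume "\<epsilon> > 0"
    then show "\<exists>A R. \<forall>i j k. \<bar>hole_score r A R i j k - (if B i j k then 1 else 0)\<bar> \<le> \<epsilon>"
      using branch1[OF True] by blast
  qed simp
next
  case False
  then have r4: "r \<ge> 4 * (\<Sum>k\<in>UNIV. rrank (bool_slice B k)) + 1" using assms(3) by simp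
  have "\<forall>k. \<exists>M::real^'n^'n. round_mat M = bool_slice B k \<and> rank M = rrank (bool_slice B k)"
  proof
    fix k
    have rb: "round_mat (bool_slice B k) = bool_slice B k"
      by (simp add: vec_eq_iff round_mat_def bool_slice_def)
    then have ne: "{rank A | A. round_mat A = bool_slice B k} \<noteq> {}" by blast
    have "rrank (bool_slice B k) \<in> {rank A | A. round_mat A = bool_slice B k}"
      unfolding rrank_def by (rule Inf_nat_def1[OF ne])
    then show "\<exists>M::real^'n^'n. round_mat M = bool_slice B k \<and> rank M = rrank (bool_slice B k)" by auto
  qed
  then obtain Mf :: "'k \<Rightarrow> real^'n^'n" where Mf: "\<And>k. round_mat (Mf k) = bool_slice B k"
    "\<And>k. rank (Mf k) = rrank (bool_slice B k)" by metis
  have Bi: "B i j k \<longleftrightarrow> Mf k $ i $ j \<ge> 1/2" for i j k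
  proof -
    have "(round_mat (Mf k)) $ i $ j = (bool_slice B k) $ i $ j" using Mf(1) by simp
    then show ?thesis by (simp add: round_mat_def bool_slice_def split: if_splits)
  qed
  have fac: "\<exists>u v. \<forall>i j. Mf k $ i $ j = (\<Sum>l<rrank (bool_slice B k). u l i * v l j)" for k
    using rank_factor[of "Mf k"] Mf(2) by simp
  obtain S \<kappa> u v where fam: "S = (\<Sum>k\<in>UNIV. rrank (bool_slice B k))"
    "\<forall>k\<in>UNIV. \<forall>i j. Mf k $ i $ j = (\<Sum>s<S. if \<kappa> s = k then u s i * v s j else 0)"
    using family_fin[where X = "\<lambda>k i j. Mf k $ i $ j" and \<rho> = "\<lambda>k. rrank (bool_slice B k)" and F = UNIV, OF fac]
    by auto
  have rS: "4 * S + 1 \<le> r" using r4 fam(1) by simp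
  show ?thesis
  proof (rule approx_sep[where X = "\<lambda>i j k. Mf k $ i $ j"])
    fix k i j i' j' assume "B i j k" "\<not> B i' j' k"
    then show "Mf k $ i $ j > Mf k $ i' $ j'" using Bi by force
  next
    fix \<epsilon> :: real assume "\<epsilon> > 0"
    then obtain A R where AR: "\<forall>i j k. \<bar>hole_score r A R i j k - (\<Sum>s<S. if \<kappa> s = k then u s i * v s j else 0)\<bar> \<le> \<epsilon>"
      using branch2[OF rS, of \<epsilon> \<kappa> u v] by blast
    show "\<exists>A R. \<forall>i j k. \<bar>hole_score r A R i j k - Mf k $ i $ j\<bar> \<le> \<epsilon>"
      using AR fam(2) by (intro exI[of _ A] exI[of _ R]) simp
  qed
qed

end
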